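(* Let $|q|<1$ and $|qa|<|z|$, with parameters such that no denominator vanishes. Then $$f(a,k,z,q)+f(-a,-k,z,q)=2f(a^2,k^2,z^2,q^2).$$
   Context: Notation: $(x;q)_n=(1-x)(1-xq)\cdots(1-xq^{n-1})$, $(x_1,\dots,x_m;q)_n=(x_1;q)_n\cdots(x_m;q)_n$. Define $$f(a,k,z,q):=\sum_{n=1}^{\infty}\frac{(q\sqrt{k},-q\sqrt{k},k,z,k/a;q)_{n}}{(\sqrt{k},-\sqrt{k},qk,qk/z,qa;q)_{n}(1-q^n)}\left(\frac{qa}{z}\right)^{n}.$$ *)

theory Defs
  imports "HOL-Analysis.Analysis"
begin

definition qpoch :: "complex \<Rightarrow> complex \<Rightarrow> nat \<Rightarrow> complex" where
  "qpoch x q n = (\<Prod>j<n. (1 - x * q ^ j))"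

text \<open>The n-th summand (n \<ge> 1) of f(a,k,z,q); sqrt k is the principal square root
  (the summand does not depend on the choice of branch).\<close>
definition fterm :: "complex \<Rightarrow> complex \<Rightarrow> complex \<Rightarrow> complex \<Rightarrow> nat \<Rightarrow> complex" where
  "fterm a k z q n =
     (qpoch (q * csqrt k) q n * qpoch (- q * csqrt k) q n * qpoch k q n * qpoch z q n
        * qpoch (k / a) q n)
     / (qpoch (csqrt k) q n * qpoch (- csqrt k) q n * qpoch (q * k) q n
        * qpoch (q * k / z) q n * qpoch (q * a) q n * (1 - q ^ n))
     * (q * a / z) ^ n"

definition f :: "complex \<Rightarrow> complex \<Rightarrow> complex \<Rightarrow> complex \<Rightarrow> complex" where
  "f a k z q = (\<Sum>n. fterm a k z q (Suc n))"

definition f_denoms_nonzero :: "complex \<Rightarrow> complex \<Rightarrow> complex \<Rightarrow> complex \<Rightarrow> bool" where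
  "f_denoms_nonzero a k z q \<longleftrightarrow> a \<noteq> 0 \<and> z \<noteq> 0 \<and>
     (\<forall>n. qpoch (csqrt k) q n \<noteq> 0 \<and> qpoch (- csqrt k) q n \<noteq> 0 \<and> qpoch (q * k) q n \<noteq> 0
          \<and> qpoch (q * k / z) q n \<noteq> 0 \<and> qpoch (q * a) q n \<noteq> 0)
     \<and> (\<forall>n\<ge>1. 1 - q ^ n \<noteq> 0)"

end

theory Submission
  imports Defs
begin

lemma qp_Suc: "qpoch x q (Suc n) = qpoch x q n * (1 - x * q ^ n)"
  by (simp add: qpoch_def)

lemma qp_0[simp]: "qpoch x q 0 = 1"
  by (simp add: qpoch_def)

lemma qp_add: "qpoch x q (m + n) = qpoch x q m * qpoch (x * q ^ m) q n"
  by (induction n) (simp_all add: qp_Suc power_add mult_ac)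

lemma qp_Suc_front: "qpoch x q (Suc n) = (1 - x) * qpoch (x * q) q n"
  using qp_add[of x q 1 n] by (simp add: qpoch_def)

lemma qp_shift: "qpoch (x * q) q n * (1 - x) = qpoch x q n * (1 - x * q ^ n)"
  by (induction n) (simp_all add: qp_Suc mult_ac)

lemma qp_nz_shift: assumes "\<forall>n. qpoch x q n \<noteq> 0" shows "qpoch (x * q ^ m) q n \<noteq> 0"
  using assms[rule_format, of "m+n"] by (simp add: qp_add)

lemma qp_factor_nz: assumes "\<forall>n. qpoch x q n \<noteq> 0" shows "1 - x * q ^ j \<noteq> 0"
  using assms[rule_format, of "Suc j"] by (simp add: qp_Suc)

lemma qp_zero: assumes "j < n" "x * q ^ j = 1" shows "qpoch x q n = 0"
  using assms unfolding qpoch_def by (intro prod_zero) auto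

lemma prod_exp_bound:
  fixes t :: "nat \<Rightarrow> real"
  assumes "\<And>j. t j \<ge> 0"
  shows "(\<Prod>j<n. 1 + t j) \<le> exp (\<Sum>j<n. t j)"
proof -
  have "(\<Prod>j<n. 1 + t j) \<le> (\<Prod>j<n. exp (t j))"
    by (rule prod_mono) (use assms in auto)
  also have "\<dots> = exp (\<Sum>j<n. t j)" by (simp add: exp_sum)
  finally show ?thesis .
qed

lemma geom_partial_le:
  fixes r :: real assumes "0 \<le> r" "r < 1"
  shows "(\<Sum>j<n. r ^ j) \<le> 1 / (1 - r)"
proof -
  have "(\<Sum>j<n. r ^ j) \<le> (\<Sum>j. r ^ j)"
    by (rule sum_le_suminf) (use assms in \<open>auto intro: summable_geometric\<close>)
  also have "\<dots> = 1 / (1 - r)" using suminf_geometric[of r] assms by simp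
  finally show ?thesis .
qed

lemma qp_upper:
  assumes "norm q < 1"
  shows "norm (qpoch x q n) \<le> exp (norm x / (1 - norm q))"
proof -
  have "norm (qpoch x q n) \<le> (\<Prod>j<n. norm (1 - x * q ^ j))"
    unfolding qpoch_def by (simp add: prod_norm)
  also have "\<dots> \<le> (\<Prod>j<n. 1 + norm x * norm q ^ j)"
    apply (rule prod_mono) apply (auto)
    by (metis norm_mult norm_one norm_power norm_triangle_ineq4)
  also have "\<dots> \<le> exp (\<Sum>j<n. norm x * norm q ^ j)"
    by (rule prod_exp_bound) auto
  also have "\<dots> \<le> exp (norm x / (1 - norm q))"
    using geom_partial_le[of "norm q" n] assms
    by (auto simp: sum_distrib_left[symmetric] mult_left_mono divide_inverse)
  finally show ?thesis .
qed

lemma V_upper: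
  fixes u q :: complex
  assumes q: "norm q < 1" and r: "0 < \<rho>" and u: "norm u \<le> \<rho>"
  shows "norm (\<Prod>j<n. u - q ^ j) \<le> \<rho> ^ n * exp (1 / (\<rho> * (1 - norm q)))"
proof -
  have pw: "norm (u - q ^ j) \<le> \<rho> + norm q ^ j" for j
  proof -
    have "norm (u - q ^ j) \<le> norm u + norm (q ^ j)" by (rule norm_triangle_ineq4)
    then show ?thesis using u by (simp add: norm_power)
  qed
  have e: "\<rho> + norm q ^ j = \<rho> * (1 + norm q ^ j / \<rho>)" for j
    using r by (simp add: distrib_left)
  have "norm (\<Prod>j<n. u - q ^ j) = (\<Prod>j<n. norm (u - q ^ j))"
    by (simp add: prod_norm)
  also have "\<dots> \<le> (\<Prod>j<n. \<rho> + norm q ^ j)"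
    by (rule prod_mono) (simp add: pw)
  also have "\<dots> = (\<Prod>j<n. \<rho> * (1 + norm q ^ j / \<rho>))"
    by (simp only: e)
  also have "\<dots> = \<rho> ^ n * (\<Prod>j<n. 1 + norm q ^ j / \<rho>)"
    by (simp add: prod.distrib)
  also have "\<dots> \<le> \<rho> ^ n * exp (\<Sum>j<n. norm q ^ j / \<rho>)"
    by (rule mult_left_mono[OF prod_exp_bound]) (use r in auto)
  also have "\<dots> \<le> \<rho> ^ n * exp (1 / (\<rho> * (1 - norm q)))"
  proof (rule mult_left_mono)
    have "(\<Sum>j<n. norm q ^ j / \<rho>) = (\<Sum>j<n. norm q ^ j) / \<rho>"
      by (simp add: sum_divide_distrib)
    also have "\<dots> \<le> (1 / (1 - norm q)) / \<rho>"
      using geom_partial_le[of "norm q" n] q r by (intro divide_right_mono) auto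
    also have "\<dots> = 1 / (\<rho> * (1 - norm q))" by (simp add: mult.commute)
    finally show "exp (\<Sum>j<n. norm q ^ j / \<rho>) \<le> exp (1 / (\<rho> * (1 - norm q)))" by simp
  qed (use r in auto)
  finally show ?thesis .
qed

lemma qp_lower_small:
  assumes "norm q < 1" "norm y \<le> (1 - norm q) / 2"
  shows "1/2 \<le> norm (qpoch y q n)"
proof -
  have s: "(\<Sum>j<n. norm y * norm q ^ j) \<le> 1/2"
  proof -
    have "(\<Sum>j<n. norm y * norm q ^ j) = norm y * (\<Sum>j<n. norm q ^ j)"
      by (simp add: sum_distrib_left)
    also have "\<dots> \<le> ((1 - norm q) / 2) * (1 / (1 - norm q))"
      by (rule mult_mono) (use assms geom_partial_le[of "norm q" n] in \<open>auto intro: sum_nonneg\<close>)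
    also have "\<dots> = 1/2" using assms by simp
    finally show ?thesis .
  qed
  have t: "norm y * norm q ^ j \<le> 1" for j
  proof -
    have "norm y * norm q ^ j \<le> norm y * 1"
      using assms by (intro mult_left_mono) (auto simp: power_le_one)
    moreover have "norm y \<le> 1"
    proof -
      have "norm y \<le> (1 - norm q) / 2" using assms(2) .
      also have "\<dots> \<le> 1"
      proof -
        have "1 - norm q \<le> 2" using norm_ge_zero[of q] by linarith
        then show ?thesis by simp
      qed
      finally show ?thesis .
    qed
    ultimately show ?thesis by simp
  qed
  have "1/2 \<le> 1 - (\<Sum>j<n. norm y * norm q ^ j)" using s by simp
  also have "\<dots> \<le> (\<Prod>j<n. 1 - norm y * norm q ^ j)"
    by (rule Weierstrass_prod_ineq) (use t in auto)
  also have "\<dots> \<le> (\<Prod>j<n. norm (1 - y * q ^ j))"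
    apply (rule prod_mono) using t apply auto
    by (metis norm_mult norm_one norm_power norm_triangle_ineq2 norm_minus_commute)
  also have "\<dots> = norm (qpoch y q n)" unfolding qpoch_def by (simp add: prod_norm)
  finally show ?thesis .
qed

lemma qp_lower:
  assumes q: "norm q < 1" and nz: "\<forall>n. qpoch x q n \<noteq> 0"
  shows "\<exists>\<delta>>0. \<forall>n. \<delta> \<le> norm (qpoch x q n)"
proof -
  have lim: "(\<lambda>n. norm x * norm q ^ n) \<longlonglongrightarrow> 0"
    using tendsto_mult[OF tendsto_const[of "norm x"] LIMSEQ_power_zero[of "norm q"]] q by simp
  have "eventually (\<lambda>n. norm x * norm q ^ n < (1 - norm q) / 2) sequentially"
    by (rule order_tendstoD(2)[OF lim]) (use q in auto)
  then obtain J where J: "norm x * norm q ^ J < (1 - norm q) / 2"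
    by (auto simp: eventually_sequentially)
  define d where "d = Min ((\<lambda>n. norm (qpoch x q n)) ` {..J})"
  have dpos: "d > 0" unfolding d_def using nz by (subst Min_gr_iff) auto
  have dle: "d \<le> norm (qpoch x q n)" if "n \<le> J" for n
    unfolding d_def using that by (intro Min_le) auto
  show ?thesis
  proof (intro exI[of _ "d/2"] conjI allI)
    show "d/2 > 0" using dpos by simp
    fix n
    show "d/2 \<le> norm (qpoch x q n)"
    proof (cases "n \<le> J")
      case True then show ?thesis using dle[of n] dpos by simp
    next
      case False
      then obtain m where n: "n = J + m" by (metis le_add_diff_inverse nat_le_linear)
      have h: "1/2 \<le> norm (qpoch (x * q ^ J) q m)"
        by (rule qp_lower_small) (use q J in \<open>auto simp: norm_mult norm_power\<close>)
      have "d/2 \<le> norm (qpoch x q J) * (1/2)" using dle[of J] by simp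
      also have "\<dots> \<le> norm (qpoch x q J) * norm (qpoch (x * q ^ J) q m)"
        by (intro mult_left_mono h) auto
      also have "\<dots> = norm (qpoch x q n)" by (simp add: n qp_add norm_mult)
      finally show ?thesis .
    qed
  qed
qed

definition Pn :: "complex \<Rightarrow> complex \<Rightarrow> complex \<Rightarrow> nat \<Rightarrow> complex" where
  "Pn a k q n = (qpoch (q * csqrt k) q n * qpoch (- q * csqrt k) q n * qpoch k q n
        * qpoch (k / a) q n)
     / (qpoch (csqrt k) q n * qpoch (- csqrt k) q n * qpoch (q * k) q n
        * qpoch (q * a) q n * (1 - q ^ n))"

lemma qp_times_pow:
  assumes "z \<noteq> 0"
  shows "qpoch z q n * (y / z) ^ n = y ^ n * (\<Prod>j<n. 1 / z - q ^ j)"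
proof -
  have "qpoch z q n = (\<Prod>j<n. z * (1 / z - q ^ j))"
    unfolding qpoch_def using assms by (intro prod.cong) (auto simp: field_simps)
  also have "\<dots> = z ^ n * (\<Prod>j<n. 1 / z - q ^ j)" by (simp add: prod.distrib)
  finally show ?thesis using assms by (simp add: power_divide field_simps)
qed

lemma fterm_alt:
  assumes "z \<noteq> 0"
  shows "fterm a k z q n = Pn a k q n * (q * a) ^ n * (\<Prod>j<n. 1 / z - q ^ j) / qpoch (q * k * (1 / z)) q n"
proof -
  have "fterm a k z q n = Pn a k q n * (qpoch z q n * (q * a / z) ^ n) / qpoch (q * k / z) q n"
    by (simp add: fterm_def Pn_def divide_inverse inverse_mult_distrib mult_ac)
  then show ?thesis by (simp add: qp_times_pow[OF assms])
qed

lemma Pn_bound: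
  assumes q: "norm q < 1"
    and n1: "\<forall>n. qpoch (csqrt k) q n \<noteq> 0" and n2: "\<forall>n. qpoch (- csqrt k) q n \<noteq> 0"
    and n3: "\<forall>n. qpoch (q * k) q n \<noteq> 0" and n4: "\<forall>n. qpoch (q * a) q n \<noteq> 0"
  shows "\<exists>P. \<forall>n. norm (Pn a k q (Suc n)) \<le> P"
proof -
  obtain d1 where d1: "d1 > 0" "\<forall>n. d1 \<le> norm (qpoch (csqrt k) q n)" using qp_lower[OF q n1] by blast
  obtain d2 where d2: "d2 > 0" "\<forall>n. d2 \<le> norm (qpoch (- csqrt k) q n)" using qp_lower[OF q n2] by blast
  obtain d3 where d3: "d3 > 0" "\<forall>n. d3 \<le> norm (qpoch (q * k) q n)" using qp_lower[OF q n3] by blast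
  obtain d4 where d4: "d4 > 0" "\<forall>n. d4 \<le> norm (qpoch (q * a) q n)" using qp_lower[OF q n4] by blast
  define E where "E x = exp (norm x / (1 - norm q))" for x :: complex
  have E: "norm (qpoch x q n) \<le> E x" for x n unfolding E_def by (rule qp_upper[OF q])
  have Epos: "E x \<ge> 0" for x unfolding E_def by simp
  let ?P = "(E (q * csqrt k) * E (- q * csqrt k) * E k * E (k / a)) / (d1 * d2 * d3 * d4 * (1 - norm q))"
  show ?thesis
  proof (intro exI[of _ ?P] allI)
    fix n
    have qn: "1 - norm q \<le> norm (1 - q ^ Suc n)"
    proof -
      have "norm q ^ Suc n \<le> norm q" using q by (auto intro!: mult_left_le power_le_one)
      moreover have "1 - norm (q ^ Suc n) \<le> norm (1 - q ^ Suc n)"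
        by (metis norm_one norm_triangle_ineq2)
      ultimately show ?thesis by (simp add: norm_mult norm_power)
    qed
    have num: "norm (qpoch (q * csqrt k) q (Suc n) * qpoch (- q * csqrt k) q (Suc n) * qpoch k q (Suc n) * qpoch (k / a) q (Suc n))
        \<le> E (q * csqrt k) * E (- q * csqrt k) * E k * E (k / a)"
      unfolding norm_mult by (intro mult_mono E Epos mult_nonneg_nonneg norm_ge_zero)
    have den: "d1 * d2 * d3 * d4 * (1 - norm q) \<le> norm (qpoch (csqrt k) q (Suc n) * qpoch (- csqrt k) q (Suc n) * qpoch (q * k) q (Suc n) * qpoch (q * a) q (Suc n) * (1 - q ^ Suc n))"
      unfolding norm_mult using d1 d2 d3 d4 q qn
      by (intro mult_mono) (auto intro: mult_nonneg_nonneg)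
    have dpos: "0 < d1 * d2 * d3 * d4 * (1 - norm q)" using d1 d2 d3 d4 q by simp
    show "norm (Pn a k q (Suc n)) \<le> ?P"
      unfolding Pn_def norm_divide
      by (rule frac_le) (use num den dpos Epos in \<open>auto intro: mult_nonneg_nonneg\<close>)
  qed
qed

lemma alg2_atoms:
  fixes Nk D1 D2 D3 D4 D5 D6 Cp E y Vv Q x :: complex
  assumes N1: "y*D5 - Vv*Q*D6 = D3*D1"
    and N2: "D5*D2 - y*E*x = D4*Nk"
    and z: "D1 \<noteq> 0" "D2 \<noteq> 0" "D3 \<noteq> 0" "D4 \<noteq> 0" "D5 \<noteq> 0" "D6 \<noteq> 0"
  shows "Nk/D1 * Cp / (D2*D3) * y - Nk/D1 * Cp / (D2*D3) * Vv * Q / (D5/D6)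
   = Cp/D4 - y*(Cp*E)*x/(D4*D5*D2)"
proof -
  have "Nk/D1 * Cp / (D2*D3) * y - Nk/D1 * Cp / (D2*D3) * Vv * Q / (D5/D6)
      = Nk*Cp*(y*D5 - Vv*Q*D6)/(D1*D2*D3*D5)"
    using z by (simp add: field_simps)
  also have "\<dots> = Nk*Cp/(D2*D5)" unfolding N1 using z by (simp add: field_simps)
  also have "\<dots> = Cp*(D5*D2 - y*E*x)/(D4*D5*D2)" unfolding N2 using z by (simp add: field_simps)
  also have "\<dots> = Cp/D4 - y*(Cp*E)*x/(D4*D5*D2)" using z by (simp add: field_simps)
  finally show ?thesis .
qed

lemma alg2_core:
  fixes q w a k P :: complex
  assumes "q \<noteq> 0" "w \<noteq> 0" "a \<noteq> 0" "1 - k*(q*P) \<noteq> 0" "1 - q*a*P \<noteq> 0"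
    "1 - q*P \<noteq> 0" "1 - q*a/w \<noteq> 0" "1 - q*k/w*(q*P) \<noteq> 0" "1 - q*k/w \<noteq> 0"
  shows "(1 - k*(q*P)^2)/(1 - k*(q*P)) * (1 - k/a*P) / ((1 - q*a*P)*(1 - q*P)) * (1 - w*P)
  - (1 - k*(q*P)^2)/(1 - k*(q*P)) * (1 - k/a*P) / ((1 - q*a*P)*(1 - q*P)) * (1 - w/q) * (q*P) / ((1 - q*k/w*(q*P))/(1 - q*k/w))
  = (1 - k/a*P)/(1 - q*a/w) - (1 - w*P)*((1-k/a*P)*(1 - k/a*(q*P)))*(q*a/w)/((1 - q*a/w)*(1 - q*k/w*(q*P))*(1 - q*a*P))"
proof -
  have N1: "(1 - w*P)*(1 - q*k/w*(q*P)) - (1 - w/q)*(q*P)*(1 - q*k/w) = (1 - q*P)*(1 - k*(q*P))"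
    using assms(1,2) by (simp add: field_simps)
  have N2: "(1 - q*k/w*(q*P))*(1 - q*a*P) - (1 - w*P)*(1 - k/a*(q*P))*(q*a/w) = (1 - q*a/w)*(1 - k*(q*P)^2)"
    using assms(2,3) by (simp add: field_simps) algebra
  show ?thesis
    using alg2_atoms[OF N1 N2] assms by simp
qed

lemma alg2_gen:
  fixes U Cp Dm Dq y Vv Q E F Dx Ec xx C0 A0 W0 X K :: complex
  assumes "U * Cp / (Dm*Dq) * y - U * Cp / (Dm*Dq) * Vv * Q / (E/F) = Cp/Dx - y*(Cp*Ec)*xx/(Dx*E*Dm)"
  shows "U * (C0*Cp) / (A0*Dm*Dq) * (W0*y) * X / K - U*(C0*Cp)/(A0*Dm*Dq)*(Vv*W0)*(Q*X)/(K*E/F)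
    = W0*(C0*Cp)*X/(Dx*K*A0) - (W0*y)*(C0*Cp*Ec)*(X*xx)/(Dx*(K*E)*(A0*Dm))"
proof -
  define G where "G = W0 * C0 * X / (K * A0)"
  have l: "U * (C0*Cp) / (A0*Dm*Dq) * (W0*y) * X / K - U*(C0*Cp)/(A0*Dm*Dq)*(Vv*W0)*(Q*X)/(K*E/F)
     = G * (U * Cp / (Dm*Dq) * y - U * Cp / (Dm*Dq) * Vv * Q / (E/F))"
    unfolding G_def by (simp add: right_diff_distrib divide_inverse inverse_mult_distrib mult_ac)
  have r: "W0*(C0*Cp)*X/(Dx*K*A0) - (W0*y)*(C0*Cp*Ec)*(X*xx)/(Dx*(K*E)*(A0*Dm))
     = G * (Cp/Dx - y*(Cp*Ec)*xx/(Dx*E*Dm))"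
    unfolding G_def by (simp add: right_diff_distrib divide_inverse inverse_mult_distrib mult_ac)
  show ?thesis unfolding l r assms ..
qed

lemma alg2:
  fixes q w a k K A0 C0 W0 X P :: complex
  assumes "q \<noteq> 0" "w \<noteq> 0" "a \<noteq> 0" "1 - k*(q*P) \<noteq> 0" "1 - q*a*P \<noteq> 0"
    "1 - q*P \<noteq> 0" "1 - q*a/w \<noteq> 0" "1 - q*k/w*(q*P) \<noteq> 0" "1 - q*k/w \<noteq> 0"
  shows "(1 - k*(q*P)^2)/(1 - k*(q*P)) * (C0*(1 - k/a*P)) / (A0*(1 - q*a*P)*(1 - q*P)) * (W0*(1 - w*P)) * X / K
  - (1 - k*(q*P)^2)/(1 - k*(q*P)) * (C0*(1 - k/a*P)) / (A0*(1 - q*a*P)*(1 - q*P)) * ((1 - w/q)*W0) * (q*P*X) / (K*(1 - q*k/w*(q*P))/(1 - q*k/w))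
  = W0*(C0*(1 - k/a*P))*X/((1 - q*a/w)*K*A0) - (W0*(1 - w*P))*(C0*(1-k/a*P)*(1 - k/a*(q*P)))*(X*(q*a/w))/((1 - q*a/w)*(K*(1 - q*k/w*(q*P)))*(A0*(1 - q*a*P)))"
  by (rule alg2_gen[OF alg2_core[OF assms]])


lemma alg1_atoms:
  fixes A B Ck Sa Sb Kq D1 D2 D3 X1 X2 c Qa W :: complex
  assumes hA: "A * D1 = Sa * X1" and hB: "B * D2 = Sb * X2" and hK: "Kq * (D1 * D2) = Ck * D3"
    and z: "Sa \<noteq> 0" "Sb \<noteq> 0" "Kq \<noteq> 0" "D1 \<noteq> 0" "D2 \<noteq> 0" "D3 \<noteq> 0"
  shows "A * B * Ck * c / (Sa * Sb * Kq * Qa * W) = (X1 * X2) / D3 * c / (Qa * W)"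
proof (cases "Qa * W = 0")
  case True then show ?thesis by auto
next
  case False
  have eA: "A = Sa * X1 / D1" using hA z by (simp add: eq_divide_eq)
  have eB: "B = Sb * X2 / D2" using hB z by (simp add: eq_divide_eq)
  have eC: "Ck = Kq * (D1 * D2) / D3" using hK z by (simp add: eq_divide_eq)
  show ?thesis unfolding eA eB eC using z False by (simp add: field_simps)
qed

lemma Pn_nice:
  assumes n1: "\<forall>n. qpoch (csqrt k) q n \<noteq> 0" and n2: "\<forall>n. qpoch (- csqrt k) q n \<noteq> 0"
    and n3: "\<forall>n. qpoch (q * k) q n \<noteq> 0"
  shows "Pn a k q n = (1 - k * (q ^ n) ^ 2) / (1 - k * q ^ n) * qpoch (k / a) q n / (qpoch (q * a) q n * (1 - q ^ n))"
proof -
  define r where "r = csqrt k"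
  have r2: "r ^ 2 = k" unfolding r_def by simp
  have hA: "qpoch (q * r) q n * (1 - r) = qpoch r q n * (1 - r * q ^ n)"
    using qp_shift[of r q n] by (simp add: mult.commute)
  have hB: "qpoch (- q * r) q n * (1 + r) = qpoch (- r) q n * (1 + r * q ^ n)"
    using qp_shift[of "- r" q n] by (simp add: mult.commute)
  have kk: "(1 - r) * (1 + r) = 1 - k" using r2 by (simp add: algebra_simps power2_eq_square)
  have hK: "qpoch (q * k) q n * ((1 - r) * (1 + r)) = qpoch k q n * (1 - k * q ^ n)"
    using qp_shift[of k q n] unfolding kk by (simp add: mult.commute)
  have X: "(1 - r * q ^ n) * (1 + r * q ^ n) = 1 - k * (q ^ n) ^ 2"
    using r2 by (simp add: algebra_simps power2_eq_square)
  have s1: "1 - r \<noteq> 0" using n1[rule_format, of 1] unfolding r_def by (simp add: qpoch_def)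
  have s3: "1 + r \<noteq> 0" using n2[rule_format, of 1] unfolding r_def by (simp add: qpoch_def)
  have kq: "1 - k * q ^ n \<noteq> 0"
  proof (cases n)
    case 0
    then show ?thesis using s1 s3 kk[symmetric] by simp
  next
    case (Suc j)
    then show ?thesis using qp_factor_nz[OF n3, of j] by (simp add: mult_ac)
  qed
  have "Pn a k q n = (1 - r * q ^ n) * (1 + r * q ^ n) / (1 - k * q ^ n) * qpoch (k / a) q n / (qpoch (q * a) q n * (1 - q ^ n))"
    unfolding Pn_def r_def[symmetric]
    by (rule alg1_atoms[OF hA hB hK]) (use n1 n2 n3 s1 s3 kq in \<open>auto simp: r_def\<close>)
  then show ?thesis unfolding X .
qed

lemma fterm_Pn: "fterm a k z q n = Pn a k q n * (qpoch z q n * (q * a / z) ^ n) / qpoch (q * k / z) q n"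
  by (simp add: fterm_def Pn_def divide_inverse inverse_mult_distrib mult_ac)

lemma FE_core:
  fixes a k w q :: complex
  assumes q0: "q \<noteq> 0" and a0: "a \<noteq> 0" and w0: "w \<noteq> 0"
    and n1: "\<forall>n. qpoch (csqrt k) q n \<noteq> 0" and n2: "\<forall>n. qpoch (- csqrt k) q n \<noteq> 0"
    and n3: "\<forall>n. qpoch (q * k) q n \<noteq> 0" and n4: "\<forall>n. qpoch (q * a) q n \<noteq> 0"
    and nk: "\<forall>n. qpoch (q * k / w) q n \<noteq> 0"
    and nq: "\<forall>n\<ge>1. 1 - q ^ n \<noteq> 0"
    and nx: "1 - q * a / w \<noteq> 0"
    and s1: "summable (\<lambda>n. fterm a k w q (Suc n))"
    and s2: "summable (\<lambda>n. fterm a k (w / q) q (Suc n))"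
    and R0: "(\<lambda>m. qpoch w q m * qpoch (k/a) q (Suc m) * (q*a/w)^(Suc m)
               / ((1 - q*a/w) * qpoch (q*k/w) q (Suc m) * qpoch (q*a) q m)) \<longlonglongrightarrow> 0"
  shows "f a k w q - f a k (w / q) q = (1 - k/a) * (q*a/w) / ((1 - q*a/w) * (1 - q*k/w))"
proof -
  define R where "R m = qpoch w q m * qpoch (k/a) q (Suc m) * (q*a/w)^(Suc m)
               / ((1 - q*a/w) * qpoch (q*k/w) q (Suc m) * qpoch (q*a) q m)" for m
  have trm: "fterm a k w q (Suc m) - fterm a k (w / q) q (Suc m) = R m - R (Suc m)" for m
  proof -
    define P where "P = q ^ m"
    define W0 where "W0 = qpoch w q m"
    define C0 where "C0 = qpoch (k/a) q m"
    define K where "K = qpoch (q*k/w) q (Suc m)"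
    define A0 where "A0 = qpoch (q*a) q m"
    define X where "X = (q*a/w)^(Suc m)"
    have qS: "q ^ Suc m = q * P" unfolding P_def by simp
    have nice: "Pn a k q (Suc m) = (1 - k*(q*P)^2)/(1 - k*(q*P)) * (C0*(1 - k/a*P)) / (A0*(1 - q*a*P)*(1 - q*P))"
      unfolding Pn_nice[OF n1 n2 n3] qS C0_def A0_def P_def by (simp add: qp_Suc mult_ac)
    have f1: "fterm a k w q (Suc m) = (1 - k*(q*P)^2)/(1 - k*(q*P)) * (C0*(1 - k/a*P)) / (A0*(1 - q*a*P)*(1 - q*P)) * (W0*(1 - w*P)) * X / K"
    proof -
      have "fterm a k w q (Suc m) = Pn a k q (Suc m) * (qpoch w q (Suc m) * X) / K"
        by (simp add: fterm_Pn X_def K_def)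
      also have "qpoch w q (Suc m) = W0*(1 - w*P)" by (simp add: qp_Suc W0_def P_def)
      finally show ?thesis unfolding nice by simp
    qed
    have nk0: "1 - q*k/w \<noteq> 0" using qp_factor_nz[OF nk, of 0] by simp
    have g1: "qpoch (w/q) q (Suc m) = (1 - w/q)*W0"
      using qp_Suc_front[of "w/q" q m] q0 by (simp add: W0_def)
    have g2: "(q*a/(w/q))^(Suc m) = q*P*X"
    proof -
      have "q*a/(w/q) = q * (q*a/w)" using q0 w0 by (simp add: field_simps)
      then show ?thesis unfolding X_def by (simp only: power_mult_distrib qS)
    qed
    have KS: "qpoch (q*k/w) q (Suc (Suc m)) = K*(1 - q*k/w*(q*P))"
      unfolding K_def qS[symmetric] by (rule qp_Suc)
    have g3: "qpoch (q*k/(w/q)) q (Suc m) = K*(1 - q*k/w*(q*P))/(1 - q*k/w)"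
    proof -
      have e: "q*k/(w/q) = q*k/w*q" using q0 w0 by (simp add: field_simps)
      have "qpoch (q*k/w) q (Suc (Suc m)) = (1 - q*k/w) * qpoch (q*k/w*q) q (Suc m)"
        by (rule qp_Suc_front)
      then show ?thesis unfolding e KS using nk0 by (simp add: field_simps)
    qed
    have f2: "fterm a k (w/q) q (Suc m) = (1 - k*(q*P)^2)/(1 - k*(q*P)) * (C0*(1 - k/a*P)) / (A0*(1 - q*a*P)*(1 - q*P)) * ((1 - w/q)*W0) * (q*P*X) / (K*(1 - q*k/w*(q*P))/(1 - q*k/w))"
    proof -
      have "fterm a k (w/q) q (Suc m) = Pn a k q (Suc m) * (qpoch (w/q) q (Suc m) * (q*a/(w/q))^(Suc m)) / qpoch (q*k/(w/q)) q (Suc m)"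
        by (rule fterm_Pn)
      then show ?thesis unfolding nice g1 g2 g3 by simp
    qed
    have r1: "R m = W0*(C0*(1 - k/a*P))*X/((1 - q*a/w)*K*A0)"
      unfolding R_def W0_def C0_def X_def K_def A0_def P_def by (simp add: qp_Suc)
    have r2: "R (Suc m) = (W0*(1 - w*P))*(C0*(1-k/a*P)*(1 - k/a*(q*P)))*(X*(q*a/w))/((1 - q*a/w)*(K*(1 - q*k/w*(q*P)))*(A0*(1 - q*a*P)))"
    proof -
      have "R (Suc m) = qpoch w q (Suc m) * qpoch (k/a) q (Suc (Suc m)) * (q*a/w)^(Suc (Suc m))
               / ((1 - q*a/w) * qpoch (q*k/w) q (Suc (Suc m)) * qpoch (q*a) q (Suc m))"
        by (simp add: R_def)
      also have "qpoch w q (Suc m) = W0*(1 - w*P)" by (simp add: qp_Suc W0_def P_def)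
      also have "qpoch (k/a) q (Suc (Suc m)) = C0*(1-k/a*P)*(1 - k/a*(q*P))"
        by (simp add: qp_Suc C0_def P_def)
      also have "(q*a/w)^(Suc (Suc m)) = X*(q*a/w)" unfolding X_def by (simp add: mult.commute)
      also note KS
      also have "qpoch (q*a) q (Suc m) = A0*(1 - q*a*P)" by (simp add: qp_Suc A0_def P_def)
      finally show ?thesis .
    qed
    have z1: "K \<noteq> 0" unfolding K_def using nk by simp
    have z2: "A0 \<noteq> 0" unfolding A0_def using n4 by simp
    have z3: "1 - k*(q*P) \<noteq> 0" using qp_factor_nz[OF n3, of m] unfolding P_def by (simp add: mult_ac)
    have z4: "1 - q*a*P \<noteq> 0" using qp_factor_nz[OF n4, of m] unfolding P_def by (simp add: mult_ac)
    have z5: "1 - q*P \<noteq> 0" using nq[rule_format, of "Suc m"] unfolding P_def by simp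
    have z6: "1 - q*k/w*(q*P) \<noteq> 0" using qp_factor_nz[OF nk, of "Suc m"] unfolding qS .
    show ?thesis unfolding f1 f2 r1 r2
      by (rule alg2) (use q0 w0 a0 z1 z2 z3 z4 z5 nx z6 nk0 in auto)
  qed
  have tel: "(\<lambda>m. R m - R (Suc m)) sums (R 0 - 0)"
    by (rule telescope_sums') (use R0 in \<open>simp add: R_def\<close>)
  have "(\<lambda>m. fterm a k w q (Suc m) - fterm a k (w / q) q (Suc m)) sums (R 0)"
    using tel by (simp add: trm)
  moreover have "(\<lambda>m. fterm a k w q (Suc m) - fterm a k (w / q) q (Suc m)) sums (f a k w q - f a k (w / q) q)"
    unfolding f_def by (intro sums_diff summable_sums s1 s2)
  ultimately have "f a k w q - f a k (w / q) q = R 0" using sums_unique2 by blast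
  also have "R 0 = (1 - k/a) * (q*a/w) / ((1 - q*a/w) * (1 - q*k/w))"
    by (simp add: R_def qpoch_def)
  finally show ?thesis .
qed

lemma gen_bounds:
  fixes a k w q :: complex
  assumes q: "norm q < 1" and a0: "a \<noteq> 0" and w0: "w \<noteq> 0"
    and lt: "norm (q * a) < norm w"
    and n1: "\<forall>n. qpoch (csqrt k) q n \<noteq> 0" and n2: "\<forall>n. qpoch (- csqrt k) q n \<noteq> 0"
    and n3: "\<forall>n. qpoch (q * k) q n \<noteq> 0" and n4: "\<forall>n. qpoch (q * a) q n \<noteq> 0"
    and nk: "\<forall>n. qpoch (q * k / w) q n \<noteq> 0"
  shows "summable (\<lambda>n. fterm a k w q (Suc n))"
    and "(\<lambda>m. qpoch w q m * qpoch (k/a) q (Suc m) * (q*a/w)^(Suc m)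
               / ((1 - q*a/w) * qpoch (q*k/w) q (Suc m) * qpoch (q*a) q m)) \<longlonglongrightarrow> 0"
proof -
  obtain P where P: "\<forall>n. norm (Pn a k q (Suc n)) \<le> P" using Pn_bound[OF q n1 n2 n3 n4] by blast
  have P0: "P \<ge> 0" using P[rule_format, of 0] norm_ge_zero order.trans by blast
  define \<rho> where "\<rho> = 1 / norm w"
  have \<rho>0: "\<rho> > 0" using w0 by (simp add: \<rho>_def)
  define E where "E = exp (1 / (\<rho> * (1 - norm q)))"
  have E0: "E > 0" by (simp add: E_def)
  obtain \<delta> where \<delta>: "\<delta> > 0" "\<forall>n. \<delta> \<le> norm (qpoch (q * k / w) q n)" using qp_lower[OF q nk] by blast
  obtain \<delta>4 where \<delta>4: "\<delta>4 > 0" "\<forall>n. \<delta>4 \<le> norm (qpoch (q * a) q n)" using qp_lower[OF q n4] by blast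
  define r where "r = norm (q * a) / norm w"
  have r0: "0 \<le> r" "r < 1" using lt w0 by (auto simp: r_def)
  have V: "norm (\<Prod>j<N. 1 / w - q ^ j) \<le> \<rho> ^ N * E" for N
    unfolding E_def by (rule V_upper[OF q \<rho>0]) (simp add: \<rho>_def norm_divide)
  have rr: "norm (q * a) ^ N * (\<rho> ^ N * E) = r ^ N * E" for N
    by (simp add: r_def \<rho>_def power_divide)
  have bnd: "norm (fterm a k w q (Suc n)) \<le> P * E / \<delta> * r ^ Suc n" for n
  proof -
    have "norm (fterm a k w q (Suc n)) = norm (Pn a k q (Suc n)) * (norm (q * a) ^ Suc n * norm (\<Prod>j<Suc n. 1 / w - q ^ j)) / norm (qpoch (q * k / w) q (Suc n))"
      unfolding fterm_alt[OF w0] by (simp add: norm_mult norm_divide norm_power)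
    also have "\<dots> \<le> P * (norm (q * a) ^ Suc n * (\<rho> ^ Suc n * E)) / \<delta>"
      by (intro frac_le mult_mono P[rule_format] mult_left_mono V mult_nonneg_nonneg)
         (use \<delta> P0 E0 \<rho>0 in auto)
    also have "\<dots> = P * E / \<delta> * r ^ Suc n" unfolding rr by simp
    finally show ?thesis .
  qed
  show "summable (\<lambda>n. fterm a k w q (Suc n))"
  proof (rule summable_comparison_test'[of "\<lambda>n. P * E / \<delta> * r ^ Suc n" 0])
    show "summable (\<lambda>n. P * E / \<delta> * r ^ Suc n)"
      using r0 by (intro summable_mult) (simp add: summable_geometric)
  qed (use bnd in auto)
  define x where "x = q * a / w"
  have nx: "norm x < 1" using lt w0 by (simp add: x_def norm_divide norm_mult)
  have nx1: "norm (1 - x) > 0" using nx by (auto simp: x_def)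
  define Ec where "Ec = exp (norm (k/a) / (1 - norm q))"
  have Ec: "norm (qpoch (k/a) q n) \<le> Ec" for n unfolding Ec_def by (rule qp_upper[OF q])
  have Ec0: "Ec > 0" by (simp add: Ec_def)
  show "(\<lambda>m. qpoch w q m * qpoch (k/a) q (Suc m) * (q*a/w)^(Suc m)
               / ((1 - q*a/w) * qpoch (q*k/w) q (Suc m) * qpoch (q*a) q m)) \<longlonglongrightarrow> 0"
  proof (rule Lim_null_comparison)
    show "eventually (\<lambda>m. norm (qpoch w q m * qpoch (k/a) q (Suc m) * (q*a/w)^(Suc m)
               / ((1 - q*a/w) * qpoch (q*k/w) q (Suc m) * qpoch (q*a) q m))
          \<le> r ^ m * (E * Ec * norm x / (norm (1 - x) * \<delta> * \<delta>4))) sequentially"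
    proof (intro always_eventually allI)
      fix m
      have e: "qpoch w q m * qpoch (k/a) q (Suc m) * (q*a/w)^(Suc m)
               / ((1 - q*a/w) * qpoch (q*k/w) q (Suc m) * qpoch (q*a) q m)
            = ((q*a)^m * (\<Prod>j<m. 1 / w - q ^ j)) * qpoch (k/a) q (Suc m) * x
               / ((1 - x) * qpoch (q*k/w) q (Suc m) * qpoch (q*a) q m)"
        unfolding x_def qp_times_pow[OF w0, symmetric] by (simp add: mult_ac)
      have "norm (((q*a)^m * (\<Prod>j<m. 1 / w - q ^ j)) * qpoch (k/a) q (Suc m) * x
               / ((1 - x) * qpoch (q*k/w) q (Suc m) * qpoch (q*a) q m))
          = (norm (q*a)^m * norm (\<Prod>j<m. 1 / w - q ^ j)) * norm (qpoch (k/a) q (Suc m)) * norm x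
               / (norm (1 - x) * norm (qpoch (q*k/w) q (Suc m)) * norm (qpoch (q*a) q m))"
        by (simp add: norm_mult norm_divide norm_power)
      also have "\<dots> \<le> (norm (q*a)^m * (\<rho> ^ m * E)) * Ec * norm x / (norm (1 - x) * \<delta> * \<delta>4)"
        by (intro frac_le mult_mono mult_left_mono V Ec mult_nonneg_nonneg mult_pos_pos order.refl)
           (use \<delta> \<delta>4 E0 Ec0 \<rho>0 nx1 in auto)
      also have "\<dots> = r ^ m * (E * Ec * norm x / (norm (1 - x) * \<delta> * \<delta>4))"
        unfolding rr by simp
      finally show "norm (qpoch w q m * qpoch (k/a) q (Suc m) * (q*a/w)^(Suc m)
               / ((1 - q*a/w) * qpoch (q*k/w) q (Suc m) * qpoch (q*a) q m))
          \<le> r ^ m * (E * Ec * norm x / (norm (1 - x) * \<delta> * \<delta>4))" unfolding e .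
    qed
    show "(\<lambda>m. r ^ m * (E * Ec * norm x / (norm (1 - x) * \<delta> * \<delta>4))) \<longlonglongrightarrow> 0"
      using tendsto_mult_left_zero[OF LIMSEQ_power_zero[of r], of "E * Ec * norm x / (norm (1 - x) * \<delta> * \<delta>4)"] r0
      by (simp only: real_norm_def abs_of_nonneg)
  qed
qed

definition R1 :: "complex \<Rightarrow> complex \<Rightarrow> complex \<Rightarrow> complex \<Rightarrow> complex" where
  "R1 a k w q = (1 - k/a) * (q*a/w) / ((1 - q*a/w) * (1 - q*k/w))"

lemma FE_gen:
  fixes a k w q :: complex
  assumes q: "norm q < 1" and q0: "q \<noteq> 0" and a0: "a \<noteq> 0" and w0: "w \<noteq> 0"
    and lt: "norm (q * a) < norm w"
    and n1: "\<forall>n. qpoch (csqrt k) q n \<noteq> 0" and n2: "\<forall>n. qpoch (- csqrt k) q n \<noteq> 0"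
    and n3: "\<forall>n. qpoch (q * k) q n \<noteq> 0" and n4: "\<forall>n. qpoch (q * a) q n \<noteq> 0"
    and nk: "\<forall>n. qpoch (q * k / w) q n \<noteq> 0"
    and nq: "\<forall>n\<ge>1. 1 - q ^ n \<noteq> 0"
  shows "f a k w q - f a k (w / q) q = R1 a k w q"
proof -
  have wq0: "w / q \<noteq> 0" using w0 q0 by simp
  have lt2: "norm (q * a) < norm (w / q)"
  proof -
    have a1: "norm q * norm w \<le> norm w" by (rule mult_left_le_one_le) (use q in auto)
    have "norm w \<le> norm w / norm q" using a1 q0 by (simp add: le_divide_eq mult.commute)
    then show ?thesis using lt by (simp add: norm_divide)
  qed
  have nk2: "\<forall>n. qpoch (q * k / (w / q)) q n \<noteq> 0"
  proof
    fix n
    have "q * k / (w / q) = q * k / w * q ^ 1" using q0 w0 by (simp add: field_simps)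
    then show "qpoch (q * k / (w / q)) q n \<noteq> 0" using qp_nz_shift[OF nk, of 1 n] by simp
  qed
  have nx: "1 - q * a / w \<noteq> 0"
  proof
    assume "1 - q * a / w = 0"
    then have "q * a = w" using w0 by (simp add: field_simps)
    then show False using lt by simp
  qed
  note g1 = gen_bounds[OF q a0 w0 lt n1 n2 n3 n4 nk]
  note g2 = gen_bounds[OF q a0 wq0 lt2 n1 n2 n3 n4 nk2]
  show ?thesis unfolding R1_def
    by (rule FE_core[OF q0 a0 w0 n1 n2 n3 n4 nk nq nx g1(1) g2(1) g1(2)])
qed

lemma ev_zero_summable:
  fixes g :: "nat \<Rightarrow> complex"
  assumes "\<And>n. n \<ge> N \<Longrightarrow> g n = 0"
  shows "summable g"
  by (rule summable_comparison_test'[of "\<lambda>_. 0" N]) (use assms in auto)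

lemma FE_term:
  fixes a k q :: complex
  assumes q0: "q \<noteq> 0" and a0: "a \<noteq> 0"
    and n1: "\<forall>n. qpoch (csqrt k) q n \<noteq> 0" and n2: "\<forall>n. qpoch (- csqrt k) q n \<noteq> 0"
    and n3: "\<forall>n. qpoch (q * k) q n \<noteq> 0" and n4: "\<forall>n. qpoch (q * a) q n \<noteq> 0"
    and nq: "\<forall>n\<ge>1. 1 - q ^ n \<noteq> 0"
  shows "f a k (1 / q ^ j) q - f a k (1 / q ^ Suc j) q = R1 a k (1 / q ^ j) q"
proof -
  define w where "w = 1 / q ^ j"
  have w0: "w \<noteq> 0" using q0 by (simp add: w_def)
  have wq: "w / q = 1 / q ^ Suc j" by (simp add: w_def)
  have nk: "\<forall>n. qpoch (q * k / w) q n \<noteq> 0"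
  proof
    fix n
    have "q * k / w = q * k * q ^ j" by (simp add: w_def)
    then show "qpoch (q * k / w) q n \<noteq> 0" using qp_nz_shift[OF n3, of j n] by simp
  qed
  have nx: "1 - q * a / w \<noteq> 0" using qp_factor_nz[OF n4, of j] by (simp add: w_def)
  have z1: "qpoch w q n = 0" if "n > j" for n
    by (rule qp_zero[OF that]) (use q0 in \<open>simp add: w_def\<close>)
  have z2: "qpoch (w / q) q n = 0" if "n > Suc j" for n
    by (rule qp_zero[OF that]) (use q0 in \<open>simp add: wq\<close>)
  have s1: "summable (\<lambda>n. fterm a k w q (Suc n))"
    by (rule ev_zero_summable[of j]) (simp add: fterm_Pn z1)
  have s2: "summable (\<lambda>n. fterm a k (w / q) q (Suc n))"
    by (rule ev_zero_summable[of "Suc j"]) (simp add: fterm_Pn z2)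
  have R0: "(\<lambda>m. qpoch w q m * qpoch (k/a) q (Suc m) * (q*a/w)^(Suc m)
               / ((1 - q*a/w) * qpoch (q*k/w) q (Suc m) * qpoch (q*a) q m)) \<longlonglongrightarrow> 0"
  proof (rule Lim_null_comparison[of _ "\<lambda>_. 0"])
    show "eventually (\<lambda>m. norm (qpoch w q m * qpoch (k/a) q (Suc m) * (q*a/w)^(Suc m)
               / ((1 - q*a/w) * qpoch (q*k/w) q (Suc m) * qpoch (q*a) q m)) \<le> 0) sequentially"
      unfolding eventually_sequentially by (rule exI[of _ "Suc j"]) (simp add: z1)
  qed simp
  have "f a k w q - f a k (w / q) q = R1 a k w q"
    unfolding R1_def by (rule FE_core[OF q0 a0 w0 n1 n2 n3 n4 nk nq nx s1 s2 R0])
  then show ?thesis unfolding wq by (simp add: w_def)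
qed

lemma R1_simp:
  assumes "a \<noteq> 0" "w \<noteq> 0" "w - q * a \<noteq> 0" "w - q * k \<noteq> 0"
  shows "R1 a k w q = q * (a - k) * w / ((w - q * a) * (w - q * k))"
proof -
  have e1: "1 - q * a / w = (w - q * a) / w" "1 - q * k / w = (w - q * k) / w" "1 - k / a = (a - k) / a"
    using assms by (simp_all add: field_simps)
  have s1: "(a - k) / a * (q * a / w) = q * (a - k) / w" using assms(1,2) by (simp add: field_simps)
  have s2: "(w - q * a) / w * ((w - q * k) / w) = ((w - q * a) * (w - q * k)) / (w * w)" by simp
  have D: "(w - q * a) * (w - q * k) \<noteq> 0" using assms(3,4) by simp
  have s3: "N / w / (Dd / (w * w)) = N * w / Dd" if "Dd \<noteq> 0" for N Dd :: complex
    using assms(2) that by (simp add: field_simps)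
  show ?thesis unfolding R1_def e1 s1 s2 s3[OF D] ..
qed

lemma frac_diff_atoms:
  fixes X A1 A2 B1 B2 :: complex
  assumes "A1 \<noteq> 0" "A2 \<noteq> 0" "B1 \<noteq> 0" "B2 \<noteq> 0"
  shows "X / (A1 * B1) - X / (A2 * B2) = X * (A2 * B2 - A1 * B1) / ((A1 * A2) * (B1 * B2))"
  using assms by (simp add: field_simps)

lemma R1_ident:
  fixes a k w q :: complex
  assumes a0: "a \<noteq> 0" and w0: "w \<noteq> 0"
    and h1: "1 - q*a/w \<noteq> 0" and h2: "1 + q*a/w \<noteq> 0" and h3: "1 - q*k/w \<noteq> 0" and h4: "1 + q*k/w \<noteq> 0"
  shows "R1 a k w q + R1 (-a) (-k) w q = 2 * R1 (a^2) (k^2) (w^2) (q^2)"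
proof -
  have e1: "w - q*a \<noteq> 0" using h1 w0 by (auto simp: field_simps)
  have e2: "w + q*a \<noteq> 0" using h2 w0 by (auto simp: field_simps)
  have e3: "w - q*k \<noteq> 0" using h3 w0 by (auto simp: field_simps)
  have e4: "w + q*k \<noteq> 0" using h4 w0 by (auto simp: field_simps)
  have p1: "(w - q*a) * (w + q*a) = w^2 - q^2 * a^2" by algebra
  have p2: "(w - q*k) * (w + q*k) = w^2 - q^2 * k^2" by algebra
  have e5: "w^2 - q^2 * a^2 \<noteq> 0" using e1 e2 p1 by (metis mult_eq_0_iff)
  have e6: "w^2 - q^2 * k^2 \<noteq> 0" using e3 e4 p2 by (metis mult_eq_0_iff)
  have r1: "R1 a k w q = q * (a - k) * w / ((w - q * a) * (w - q * k))"
    by (rule R1_simp) (use a0 w0 e1 e3 in auto)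
  have r2: "R1 (-a) (-k) w q = - (q * (a - k) * w) / ((w + q * a) * (w + q * k))"
  proof -
    have "R1 (-a) (-k) w q = q * (-a - -k) * w / ((w - q * -a) * (w - q * -k))"
      by (rule R1_simp) (use a0 w0 e2 e4 in auto)
    moreover have "q * (-a - -k) * w = - (q * (a - k) * w)" by algebra
    moreover have "w - q * -a = w + q * a" "w - q * -k = w + q * k" by simp_all
    ultimately show ?thesis by (simp only: minus_divide_left)
  qed
  have r3: "R1 (a^2) (k^2) (w^2) (q^2) = q^2 * (a^2 - k^2) * w^2 / ((w^2 - q^2 * a^2) * (w^2 - q^2 * k^2))"
    by (rule R1_simp) (use a0 w0 e5 e6 in auto)
  have d: "(w + q*a) * (w + q*k) - (w - q*a) * (w - q*k) = 2 * w * q * (a + k)"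
    by algebra
  have "R1 a k w q + R1 (-a) (-k) w q
      = q * (a - k) * w / ((w - q * a) * (w - q * k)) - q * (a - k) * w / ((w + q * a) * (w + q * k))"
    unfolding r1 r2 by simp
  also have "\<dots> = q * (a - k) * w * ((w + q*a) * (w + q*k) - (w - q*a) * (w - q*k))
        / (((w - q*a) * (w + q*a)) * ((w - q*k) * (w + q*k)))"
    by (rule frac_diff_atoms) (use e1 e2 e3 e4 in auto)
  also have "\<dots> = q * (a - k) * w * (2 * w * q * (a + k)) / ((w^2 - q^2 * a^2) * (w^2 - q^2 * k^2))"
    unfolding d p1 p2 ..
  also have "\<dots> = 2 * (q^2 * (a^2 - k^2) * w^2 / ((w^2 - q^2 * a^2) * (w^2 - q^2 * k^2)))"
  proof -
    have "q * (a - k) * w * (2 * w * q * (a + k)) = 2 * (q^2 * (a^2 - k^2) * w^2)" by algebra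
    then show ?thesis by (simp only: times_divide_eq_right)
  qed
  finally show ?thesis unfolding r3 .
qed

definition Lf :: "complex \<Rightarrow> complex \<Rightarrow> complex \<Rightarrow> complex" where
  "Lf a k q = (\<Sum>n. Pn a k q (Suc n) * (q*a)^(Suc n) * (\<Prod>j<Suc n. 0 - q^j) / qpoch (q*k*0) q (Suc n))"

lemma LIM:
  fixes a k c q :: complex
  assumes q: "norm q < 1" and a0: "a \<noteq> 0" and c0: "c \<noteq> 0"
    and lt: "norm (q * a) < norm c"
    and n1: "\<forall>n. qpoch (csqrt k) q n \<noteq> 0" and n2: "\<forall>n. qpoch (- csqrt k) q n \<noteq> 0"
    and n3: "\<forall>n. qpoch (q * k) q n \<noteq> 0" and n4: "\<forall>n. qpoch (q * a) q n \<noteq> 0"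
  shows "(\<lambda>m. f a k (c / q ^ m) q) \<longlonglongrightarrow> Lf a k q"
proof -
  obtain P where P: "\<forall>n. norm (Pn a k q (Suc n)) \<le> P" using Pn_bound[OF q n1 n2 n3 n4] by blast
  have P0: "P \<ge> 0" using P[rule_format, of 0] norm_ge_zero order.trans by blast
  define \<rho> where "\<rho> = 1 / norm c"
  have \<rho>0: "\<rho> > 0" using c0 by (simp add: \<rho>_def)
  define E where "E = exp (1 / (\<rho> * (1 - norm q)))"
  have E0: "E > 0" by (simp add: E_def)
  define r where "r = norm (q * a) / norm c"
  have r0: "0 \<le> r" "r < 1" using lt c0 by (auto simp: r_def)
  have rr: "norm (q * a) ^ N * (\<rho> ^ N * E) = r ^ N * E" for N
    by (simp add: r_def \<rho>_def power_divide)
  define u where "u m = q ^ m / c" for m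
  have fe: "fterm a k (c / q ^ m) q N = Pn a k q N * (q*a)^N * (\<Prod>j<N. u m - q^j) / qpoch (q*k*u m) q N" for m N
  proof (cases "q = 0")
    case True
    then show ?thesis by (cases N) (simp_all add: fterm_def u_def Pn_def)
  next
    case False
    then have "c / q ^ m \<noteq> 0" using c0 by simp
    from fterm_alt[OF this] show ?thesis using False by (simp add: u_def)
  qed
  have u_lim: "u \<longlonglongrightarrow> 0"
    unfolding u_def[abs_def] by (rule tendsto_divide_zero[OF LIMSEQ_power_zero[OF q]])
  have nu: "norm (u m) \<le> \<rho>" for m
  proof -
    have "norm q ^ m \<le> 1" using q by (simp add: power_le_one)
    then show ?thesis by (simp add: u_def \<rho>_def norm_divide norm_power divide_right_mono)
  qed
  have lim0: "(\<lambda>m. norm (q*k) * (norm q ^ m / norm c)) \<longlonglongrightarrow> 0"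
    by (intro tendsto_mult_right_zero tendsto_divide_zero LIMSEQ_power_zero) (use q in simp)
  have "eventually (\<lambda>m. norm (q*k) * (norm q ^ m / norm c) < (1 - norm q) / 2) sequentially"
    by (rule order_tendstoD(2)[OF lim0]) (use q in auto)
  then obtain M0 where M0: "\<forall>m\<ge>M0. norm (q*k) * (norm q ^ m / norm c) < (1 - norm q) / 2"
    by (auto simp: eventually_sequentially)
  define b where "b n = Pn a k q (Suc n) * (q*a)^(Suc n) * (\<Prod>j<Suc n. 0 - q^j) / qpoch (q*k*0) q (Suc n)" for n
  have lim: "(\<lambda>m. fterm a k (c / q ^ m) q (Suc n)) \<longlonglongrightarrow> b n" for n
    unfolding fe b_def qpoch_def
    by (intro tendsto_intros u_lim) simp
  have bound: "eventually (\<lambda>(n, m). norm (fterm a k (c / q ^ m) q (Suc n)) \<le> P * E * 2 * r ^ Suc n)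
      (at_top \<times>\<^sub>F sequentially)"
    unfolding eventually_prod_sequentially
  proof (intro exI[of _ M0] allI impI)
    fix m n :: nat assume m: "m \<ge> M0"
    have V: "norm (\<Prod>j<Suc n. u m - q ^ j) \<le> \<rho> ^ Suc n * E"
      unfolding E_def by (rule V_upper[OF q \<rho>0 nu])
    have D: "1/2 \<le> norm (qpoch (q*k*u m) q (Suc n))"
      by (rule qp_lower_small[OF q]) (use M0 m in \<open>auto simp: u_def norm_mult norm_divide norm_power\<close>)
    have "norm (fterm a k (c / q ^ m) q (Suc n)) = norm (Pn a k q (Suc n)) * (norm (q * a) ^ Suc n * norm (\<Prod>j<Suc n. u m - q ^ j)) / norm (qpoch (q*k*u m) q (Suc n))"
      unfolding fe by (simp add: norm_mult norm_divide norm_power)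
    also have "\<dots> \<le> P * (norm (q * a) ^ Suc n * (\<rho> ^ Suc n * E)) / (1/2)"
      by (intro frac_le mult_mono P[rule_format] mult_left_mono V D mult_nonneg_nonneg)
         (use P0 E0 \<rho>0 in auto)
    also have "\<dots> = P * E * 2 * r ^ Suc n" unfolding rr by simp
    finally show "(case (n, m) of (n, m) \<Rightarrow> norm (fterm a k (c / q ^ m) q (Suc n)) \<le> P * E * 2 * r ^ Suc n)"
      by simp
  qed
  have summ: "summable (\<lambda>n. P * E * 2 * r ^ Suc n)"
    using r0 by (intro summable_mult) (simp add: summable_geometric)
  have "((\<lambda>m. suminf (\<lambda>n. fterm a k (c / q ^ m) q (Suc n))) \<longlongrightarrow> suminf b) sequentially"
    using tannerys_theorem[OF lim bound summ] by simp
  then show ?thesis unfolding f_def[abs_def] Lf_def b_def[symmetric] by simp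
qed

lemma f_q0: "f a k z 0 = 0"
  by (simp add: f_def fterm_def)

lemma f_one: "f a k 1 q = 0"
proof -
  have "fterm a k 1 q (Suc n) = 0" for n
    by (simp add: fterm_Pn qp_zero[of 0 "Suc n"])
  then show ?thesis by (simp add: f_def)
qed

theorem lemma2p4:
  fixes a k z q :: complex
  assumes "norm q < 1" and "norm (q * a) < norm z"
    and "f_denoms_nonzero a k z q"
    and "f_denoms_nonzero (- a) (- k) z q"
    and "f_denoms_nonzero (a ^ 2) (k ^ 2) (z ^ 2) (q ^ 2)"
  shows "f a k z q + f (- a) (- k) z q = 2 * f (a ^ 2) (k ^ 2) (z ^ 2) (q ^ 2)"
proof (cases "q = 0")
  case True
  then show ?thesis by (simp add: f_q0)
next
  case False
  note q0 = False
  note q = assms(1) and lt = assms(2)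
  have q2: "norm (q^2) < 1" using q by (simp add: norm_power power_less_one_iff)
  have q20: "q^2 \<noteq> 0" using q0 by simp
  note d1 = assms(3)[unfolded f_denoms_nonzero_def]
  note d2 = assms(4)[unfolded f_denoms_nonzero_def]
  note d3 = assms(5)[unfolded f_denoms_nonzero_def]
  have a0: "a \<noteq> 0" and z0: "z \<noteq> 0" using d1 by auto
  have a20: "a^2 \<noteq> 0" and ma0: "- a \<noteq> 0" using a0 by auto
  have n1: "\<forall>n. qpoch (csqrt k) q n \<noteq> 0" and n2: "\<forall>n. qpoch (- csqrt k) q n \<noteq> 0"
    and n3: "\<forall>n. qpoch (q * k) q n \<noteq> 0" and n4: "\<forall>n. qpoch (q * a) q n \<noteq> 0"
    and nk: "\<forall>n. qpoch (q * k / z) q n \<noteq> 0" and nq: "\<forall>n\<ge>1. 1 - q ^ n \<noteq> 0"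
    using d1 by auto
  have m1: "\<forall>n. qpoch (csqrt (-k)) q n \<noteq> 0" and m2: "\<forall>n. qpoch (- csqrt (-k)) q n \<noteq> 0"
    and m3: "\<forall>n. qpoch (q * - k) q n \<noteq> 0" and m4: "\<forall>n. qpoch (q * - a) q n \<noteq> 0"
    and mk: "\<forall>n. qpoch (q * - k / z) q n \<noteq> 0"
    using d2 by auto
  have s1: "\<forall>n. qpoch (csqrt (k^2)) (q^2) n \<noteq> 0" and s2: "\<forall>n. qpoch (- csqrt (k^2)) (q^2) n \<noteq> 0"
    and s3: "\<forall>n. qpoch (q^2 * k^2) (q^2) n \<noteq> 0" and s4: "\<forall>n. qpoch (q^2 * a^2) (q^2) n \<noteq> 0"
    and sk: "\<forall>n. qpoch (q^2 * k^2 / z^2) (q^2) n \<noteq> 0" and sq: "\<forall>n\<ge>1. 1 - (q^2) ^ n \<noteq> 0"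
    using d3 by auto
  define H where "H w = f a k w q + f (- a) (- k) w q - 2 * f (a ^ 2) (k ^ 2) (w ^ 2) (q ^ 2)" for w
  have stepA: "H (z / q ^ j / q) = H (z / q ^ j)" for j
  proof -
    define w where "w = z / q ^ j"
    have w0: "w \<noteq> 0" using z0 q0 by (simp add: w_def)
    have nzle: "norm z \<le> norm w"
    proof -
      have "norm q ^ j \<le> 1" using q by (simp add: power_le_one)
      moreover have "norm q ^ j > 0" using q0 by simp
      ultimately have "norm z \<le> norm z / norm q ^ j"
        by (simp add: le_divide_eq mult_left_le)
      then show ?thesis by (simp add: w_def norm_divide norm_power)
    qed
    have ltw: "norm (q * a) < norm w" using lt nzle by simp
    have ltw': "norm (q * - a) < norm w" using ltw by simp
    have ltw2: "norm (q^2 * a^2) < norm (w^2)"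
    proof -
      have "norm (q^2 * a^2) = norm (q * a) ^ 2" by (simp add: norm_mult norm_power power_mult_distrib)
      also have "\<dots> < norm w ^ 2" using ltw by (intro power_strict_mono) auto
      finally show ?thesis by (simp add: norm_power)
    qed
    have nkw: "\<forall>n. qpoch (q * k / w) q n \<noteq> 0"
    proof
      fix n
      have "q * k / w = q * k / z * q ^ j" using q0 z0 by (simp add: w_def field_simps)
      then show "qpoch (q * k / w) q n \<noteq> 0" using qp_nz_shift[OF nk, of j n] by simp
    qed
    have mkw: "\<forall>n. qpoch (q * - k / w) q n \<noteq> 0"
    proof
      fix n
      have "q * - k / w = q * - k / z * q ^ j" using q0 z0 by (simp add: w_def field_simps)
      then show "qpoch (q * - k / w) q n \<noteq> 0" using qp_nz_shift[OF mk, of j n] by simp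
    qed
    have skw: "\<forall>n. qpoch (q^2 * k^2 / w^2) (q^2) n \<noteq> 0"
    proof
      fix n
      have "q^2 * k^2 / w^2 = q^2 * k^2 / z^2 * (q^2) ^ j" using q0 z0
        by (simp add: w_def field_simps power_divide power_mult_distrib flip: power_mult)
      then show "qpoch (q^2 * k^2 / w^2) (q^2) n \<noteq> 0" using qp_nz_shift[OF sk, of j n] by simp
    qed
    have w20: "w^2 \<noteq> 0" using w0 by simp
    have e1: "f a k w q - f a k (w / q) q = R1 a k w q"
      by (rule FE_gen[OF q q0 a0 w0 ltw n1 n2 n3 n4 nkw nq])
    have e2: "f (-a) (-k) w q - f (-a) (-k) (w / q) q = R1 (-a) (-k) w q"
      by (rule FE_gen[OF q q0 ma0 w0 ltw' m1 m2 m3 m4 mkw nq])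
    have e3: "f (a^2) (k^2) (w^2) (q^2) - f (a^2) (k^2) (w^2 / q^2) (q^2) = R1 (a^2) (k^2) (w^2) (q^2)"
      by (rule FE_gen[OF q2 q20 a20 w20 ltw2 s1 s2 s3 s4 skw sq])
    have x1: "norm (q * a / w) < 1" using ltw w0 by (simp add: norm_divide)
    have h1: "1 - q*a/w \<noteq> 0" using x1 by auto
    have h2: "1 + q*a/w \<noteq> 0"
    proof
      assume "1 + q*a/w = 0" then have "q*a/w = -1" by (simp add: add_eq_0_iff)
      then show False using x1 by simp
    qed
    have h3: "1 - q*k/w \<noteq> 0" using qp_factor_nz[OF nkw, of 0] by simp
    have h4: "1 + q*k/w \<noteq> 0" using qp_factor_nz[OF mkw, of 0] by simp
    have id: "R1 a k w q + R1 (-a) (-k) w q = 2 * R1 (a^2) (k^2) (w^2) (q^2)"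
      by (rule R1_ident[OF a0 w0 h1 h2 h3 h4])
    have "(w / q)^2 = w^2 / q^2" by (simp add: power_divide)
    then show ?thesis unfolding H_def w_def[symmetric] using e1 e2 e3 id
      by (simp add: algebra_simps)
  qed
  have A: "H (z / q ^ j) = H z" for j
  proof (induction j)
    case 0 then show ?case by simp
  next
    case (Suc j)
    have e: "z / q ^ Suc j = z / q ^ j / q" by (simp add: field_simps)
    show ?case unfolding e stepA[of j] by (rule Suc.IH)
  qed
  have B: "H (1 / q ^ j) = 0" for j
  proof (induction j)
    case 0 then show ?case by (simp add: H_def f_one)
  next
    case (Suc j)
    define w where "w = 1 / q ^ j"
    have w0: "w \<noteq> 0" using q0 by (simp add: w_def)
    have e1: "f a k w q - f a k (1 / q ^ Suc j) q = R1 a k w q"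
      unfolding w_def by (rule FE_term[OF q0 a0 n1 n2 n3 n4 nq])
    have e2: "f (-a) (-k) w q - f (-a) (-k) (1 / q ^ Suc j) q = R1 (-a) (-k) w q"
      unfolding w_def by (rule FE_term[OF q0 ma0 m1 m2 m3 m4 nq])
    have e3: "f (a^2) (k^2) (1 / (q^2) ^ j) (q^2) - f (a^2) (k^2) (1 / (q^2) ^ Suc j) (q^2) = R1 (a^2) (k^2) (1 / (q^2) ^ j) (q^2)"
      by (rule FE_term[OF q20 a20 s1 s2 s3 s4 sq])
    have pq: "(q^2)^i = (q^i)^2" for i :: nat by (metis power_mult mult.commute)
    have p1: "1 / (q^2) ^ j = w^2" by (simp add: w_def power_divide pq)
    have p2: "1 / (q^2) ^ Suc j = (1 / q ^ Suc j)^2" by (simp only: power_divide pq power_one)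
    have h1: "1 - q*a/w \<noteq> 0" using qp_factor_nz[OF n4, of j] by (simp add: w_def)
    have h2: "1 + q*a/w \<noteq> 0" using qp_factor_nz[OF m4, of j] by (simp add: w_def)
    have h3: "1 - q*k/w \<noteq> 0" using qp_factor_nz[OF n3, of j] by (simp add: w_def)
    have h4: "1 + q*k/w \<noteq> 0" using qp_factor_nz[OF m3, of j] by (simp add: w_def)
    have id: "R1 a k w q + R1 (-a) (-k) w q = 2 * R1 (a^2) (k^2) (w^2) (q^2)"
      by (rule R1_ident[OF a0 w0 h1 h2 h3 h4])
    have Hw: "H w = 0" using Suc by (simp add: w_def)
    have e1': "f a k (1 / q ^ Suc j) q = f a k w q - R1 a k w q" using e1 by (simp add: algebra_simps)
    have e2': "f (-a) (-k) (1 / q ^ Suc j) q = f (-a) (-k) w q - R1 (-a) (-k) w q"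
      using e2 by (simp add: algebra_simps)
    have e3': "f (a^2) (k^2) ((1 / q ^ Suc j)^2) (q^2) = f (a^2) (k^2) (w^2) (q^2) - R1 (a^2) (k^2) (w^2) (q^2)"
      using e3 unfolding p1 p2 by (simp add: algebra_simps)
    have "H (1 / q ^ Suc j) = H w - (R1 a k w q + R1 (-a) (-k) w q - 2 * R1 (a^2) (k^2) (w^2) (q^2))"
      unfolding H_def e1' e2' e3' by (simp add: algebra_simps)
    then show ?case using Hw id by simp
  qed
  have "(\<lambda>m. norm (q*a) * norm q ^ m) \<longlonglongrightarrow> norm (q*a) * 0"
    by (intro tendsto_intros) (use q in auto)
  then have "eventually (\<lambda>m. norm (q*a) * norm q ^ m < 1) sequentially"
    by (intro order_tendstoD(2)) auto
  then obtain m0 where m0: "norm (q*a) * norm q ^ m0 < 1" by (auto simp: eventually_sequentially)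
  define c where "c = 1 / q ^ m0"
  have c0: "c \<noteq> 0" using q0 by (simp add: c_def)
  have ltc: "norm (q * a) < norm c"
    using m0 q0 by (simp add: c_def norm_divide norm_power field_simps)
  define L where "L = Lf a k q + Lf (-a) (-k) q - 2 * Lf (a^2) (k^2) (q^2)"
  have Hlim: "(\<lambda>m. H (d / q ^ m)) \<longlonglongrightarrow> L" if d0: "d \<noteq> 0" and ltd: "norm (q * a) < norm d" for d
  proof -
    have ltd': "norm (q * - a) < norm d" using ltd by simp
    have ltd2: "norm (q^2 * a^2) < norm (d^2)"
    proof -
      have "norm (q^2 * a^2) = norm (q * a) ^ 2" by (simp add: norm_mult norm_power power_mult_distrib)
      also have "\<dots> < norm d ^ 2" using ltd by (intro power_strict_mono) auto
      finally show ?thesis by (simp add: norm_power)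
    qed
    have d20: "d^2 \<noteq> 0" using d0 by simp
    have l1: "(\<lambda>m. f a k (d / q ^ m) q) \<longlonglongrightarrow> Lf a k q"
      by (rule LIM[OF q a0 d0 ltd n1 n2 n3 n4])
    have l2: "(\<lambda>m. f (-a) (-k) (d / q ^ m) q) \<longlonglongrightarrow> Lf (-a) (-k) q"
      by (rule LIM[OF q ma0 d0 ltd' m1 m2 m3 m4])
    have l3: "(\<lambda>m. f (a^2) (k^2) (d^2 / (q^2) ^ m) (q^2)) \<longlonglongrightarrow> Lf (a^2) (k^2) (q^2)"
      by (rule LIM[OF q2 a20 d20 ltd2 s1 s2 s3 s4])
    have pe: "d^2 / (q^2) ^ m = (d / q ^ m)^2" for m
      by (simp only: power_divide) (metis power_mult mult.commute)
    show ?thesis unfolding H_def L_def using l1 l2 l3 unfolding pe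
      by (intro tendsto_intros)
  qed
  have "(\<lambda>m. H (z / q ^ m)) \<longlonglongrightarrow> L" by (rule Hlim[OF z0 lt])
  then have HzL: "H z = L" using A by (simp add: LIMSEQ_const_iff)
  have "(\<lambda>m. H (c / q ^ m)) \<longlonglongrightarrow> L" by (rule Hlim[OF c0 ltc])
  moreover have "H (c / q ^ m) = 0" for m
  proof -
    have "c / q ^ m = 1 / q ^ (m0 + m)" by (simp add: c_def power_add)
    then show ?thesis using B by simp
  qed
  ultimately have "L = 0" by (simp add: LIMSEQ_const_iff)
  then have "H z = 0" using HzL by simp
  then show ?thesis unfolding H_def by simp
qed

end
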